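(* Let $\hat\pi=(\hat\pi_h)_{h=1}^H$ be any chunking policy and $\sigma>0$. Then the smoothed policy $\hat\pi_\sigma$ is $\gamma_{\mathrm{TVC}}$-TVC with $\gamma_{\mathrm{TVC}}(u)=\dfrac{u\sqrt{2\tau_o-1}}{2\sigma}$, i.e. for all $h$ and all $o,o'\in\mathcal{O}$, $\mathrm{TV}(\hat\pi_{\sigma,h}(o),\hat\pi_{\sigma,h}(o'))\le \frac{\sqrt{2\tau_o-1}}{2\sigma}\,d_{\mathrm{traj}}(o,o')$.
   Context: Let $\mathcal{O}=(\mathbb{R}^{d_x})^{\tau_o}\times(\mathbb{R}^{d_u})^{\tau_o-1}$ be the space of observation chunks $o=(x_{1:\tau_o},u_{1:\tau_o-1})$, identified with a Euclidean space, and $\mathcal{A}$ a Polish space of composite actions. A chunking policy is a sequence of probability kernels $\hat\pi_h:\mathcal{O}\to\Delta(\mathcal{A})$, $h=1,\dots,H$. The smoothed policy $\hat\pi_\sigma$ has $\hat\pi_{\sigma,h}(o)$ equal to the law of $a\sim\hat\pi_h(\tilde o)$ where $\tilde o\sim\mathcal{N}(o,\sigma^2I)$. For $o,o'\in\mathcal{O}$, $d_{\mathrm{traj}}(o,o')=\max_k\|x_k-x'_k\|\vee\max_k\|u_k-u'_k\|$ (Euclidean norms). $\mathrm{TV}$ is total variation distance. *)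

theory Defs
  imports "HOL-Probability.Probability"
begin

type_synonym ('x, 'u) obs = "(nat \<Rightarrow> 'x) \<times> (nat \<Rightarrow> 'u)"

text \<open>Observation chunks o = (x_{1..tau}, u_{1..tau-1}) with x_k in 'x = R^dx, u_k in 'u = R^du.
  The measurable space is the product of Lebesgue--Borel measures on the coordinates.\<close>
definition obs_measure :: "nat \<Rightarrow> ('x::euclidean_space, 'u::euclidean_space) obs measure" where
  "obs_measure \<tau> = (\<Pi>\<^sub>M k\<in>{1..\<tau>}. lborel) \<Otimes>\<^sub>M (\<Pi>\<^sub>M k\<in>{1..\<tau>-1}. lborel)"

definition obs_dist2 :: "nat \<Rightarrow> ('x::euclidean_space, 'u::euclidean_space) obs \<Rightarrow> ('x, 'u) obs \<Rightarrow> real" where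
  "obs_dist2 \<tau> ob ob' = (\<Sum>k\<in>{1..\<tau>}. (norm (fst ob k - fst ob' k))\<^sup>2)
                        + (\<Sum>k\<in>{1..\<tau>-1}. (norm (snd ob k - snd ob' k))\<^sup>2)"

definition obs_dim :: "nat \<Rightarrow> ('x::euclidean_space \<times> 'u::euclidean_space) itself \<Rightarrow> nat" where
  "obs_dim \<tau> _ = \<tau> * DIM('x) + (\<tau> - 1) * DIM('u)"

definition gauss_obs :: "nat \<Rightarrow> real \<Rightarrow> ('x::euclidean_space, 'u::euclidean_space) obs \<Rightarrow> ('x, 'u) obs measure" where
  "gauss_obs \<tau> \<sigma> ob = density (obs_measure \<tau>)
     (\<lambda>y. ennreal ((2 * pi * \<sigma>\<^sup>2) powr (- real (obs_dim \<tau> TYPE('x \<times> 'u)) / 2)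
                    * exp (- obs_dist2 \<tau> y ob / (2 * \<sigma>\<^sup>2))))"

definition smoothed_policy :: "nat \<Rightarrow> real \<Rightarrow> (nat \<Rightarrow> ('x::euclidean_space, 'u::euclidean_space) obs \<Rightarrow> 'a measure)
     \<Rightarrow> nat \<Rightarrow> ('x, 'u) obs \<Rightarrow> 'a measure" where
  "smoothed_policy \<tau> \<sigma> \<pi> h ob = gauss_obs \<tau> \<sigma> ob \<bind> \<pi> h"

definition tv_dist :: "'a measure \<Rightarrow> 'a measure \<Rightarrow> real" where
  "tv_dist P Q = (SUP A\<in>sets P. \<bar>measure P A - measure Q A\<bar>)"

definition d_traj :: "nat \<Rightarrow> ('x::euclidean_space, 'u::euclidean_space) obs \<Rightarrow> ('x, 'u) obs \<Rightarrow> real" where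
  "d_traj \<tau> ob ob' = Max ((\<lambda>k. norm (fst ob k - fst ob' k)) ` {1..\<tau>}
                          \<union> (\<lambda>k. norm (snd ob k - snd ob' k)) ` {1..\<tau>-1})"

end

theory Submission
  imports Defs
begin

lemma gauss1:
  fixes \<sigma> a :: real assumes "\<sigma> > 0"
  shows "(\<integral>\<^sup>+x. ennreal (exp (-(x - a)\<^sup>2 / (2 * \<sigma>\<^sup>2))) \<partial>lborel) = ennreal (sqrt (2 * pi * \<sigma>\<^sup>2))"
proof -
  have s: "sqrt (2 * pi * \<sigma>\<^sup>2) > 0" using assms by simp
  have "(\<integral>\<^sup>+x. ennreal (exp (-(x - a)\<^sup>2 / (2 * \<sigma>\<^sup>2))) \<partial>lborel)
      = (\<integral>\<^sup>+x. ennreal (sqrt (2 * pi * \<sigma>\<^sup>2)) * ennreal (normal_density a \<sigma> x) \<partial>lborel)"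
    using s assms by (intro nn_integral_cong) (simp add: normal_density_def ennreal_mult[symmetric])
  also have "\<dots> = ennreal (sqrt (2 * pi * \<sigma>\<^sup>2)) * (\<integral>\<^sup>+x. ennreal (normal_density a \<sigma> x) \<partial>lborel)"
    by (rule nn_integral_cmult) simp
  also have "(\<integral>\<^sup>+x. ennreal (normal_density a \<sigma> x) \<partial>lborel) = 1"
    by (subst nn_integral_eq_integral) (auto simp: integrable_normal_density[OF assms] integral_normal_density[OF assms])
  finally show ?thesis by simp
qed

lemma norm_sq_Basis: "(norm (x::'a::euclidean_space))\<^sup>2 = (\<Sum>b\<in>Basis. (x \<bullet> b)\<^sup>2)"
  unfolding power2_norm_eq_inner by (subst euclidean_inner) (simp add: power2_eq_square)

lemma gaussE:
  fixes \<sigma> :: real and c :: "'a::euclidean_space" assumes "\<sigma> > 0"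
  shows "(\<integral>\<^sup>+x. ennreal (exp (-(norm (x - c))\<^sup>2 / (2 * \<sigma>\<^sup>2))) \<partial>lborel) = ennreal (sqrt (2 * pi * \<sigma>\<^sup>2) ^ DIM('a))"
proof -
  have "(\<integral>\<^sup>+x. ennreal (exp (-(norm (x - c))\<^sup>2 / (2 * \<sigma>\<^sup>2))) \<partial>lborel)
     = (\<integral>\<^sup>+x. (\<Prod>b\<in>Basis. (\<lambda>b t. ennreal (exp (-(t - c \<bullet> b)\<^sup>2 / (2 * \<sigma>\<^sup>2)))) b (x \<bullet> b)) \<partial>lborel)"
  proof (intro nn_integral_cong)
    fix x :: 'a
    have "-(norm (x - c))\<^sup>2 / (2 * \<sigma>\<^sup>2) = (\<Sum>b\<in>Basis. -(x \<bullet> b - c \<bullet> b)\<^sup>2 / (2 * \<sigma>\<^sup>2))"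
      by (simp add: norm_sq_Basis inner_diff_left sum_divide_distrib[symmetric] sum_negf)
    then show "ennreal (exp (-(norm (x - c))\<^sup>2 / (2 * \<sigma>\<^sup>2))) = (\<Prod>b\<in>Basis. (\<lambda>b t. ennreal (exp (-(t - c \<bullet> b)\<^sup>2 / (2 * \<sigma>\<^sup>2)))) b (x \<bullet> b))"
      by (simp add: exp_sum prod_ennreal)
  qed
  also have "\<dots> = (\<Prod>b\<in>(Basis::'a set). ennreal (sqrt (2 * pi * \<sigma>\<^sup>2)))"
    by (subst nn_integral_lborel_prod) (auto simp: gauss1[OF assms, simplified])
  finally show ?thesis by (simp add: prod_ennreal ennreal_power)
qed

lemma gaussP:
  fixes \<sigma> :: real and c :: "nat \<Rightarrow> 'a::euclidean_space" and I :: "nat set"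
  assumes "\<sigma> > 0" "finite I"
  shows "(\<integral>\<^sup>+y. ennreal (exp (-(\<Sum>k\<in>I. (norm (y k - c k))\<^sup>2) / (2 * \<sigma>\<^sup>2))) \<partial>(\<Pi>\<^sub>M k\<in>I. lborel))
     = ennreal (sqrt (2 * pi * \<sigma>\<^sup>2) ^ (card I * DIM('a)))"
proof -
  interpret product_sigma_finite "\<lambda>_. lborel :: 'a measure" by standard
  have "(\<integral>\<^sup>+y. ennreal (exp (-(\<Sum>k\<in>I. (norm (y k - c k))\<^sup>2) / (2 * \<sigma>\<^sup>2))) \<partial>(\<Pi>\<^sub>M k\<in>I. lborel))
     = (\<integral>\<^sup>+y. (\<Prod>k\<in>I. (\<lambda>k x. ennreal (exp (-(norm (x - c k))\<^sup>2 / (2 * \<sigma>\<^sup>2)))) k (y k)) \<partial>(\<Pi>\<^sub>M k\<in>I. lborel))"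
  proof (intro nn_integral_cong)
    fix y :: "nat \<Rightarrow> 'a"
    have "-(\<Sum>k\<in>I. (norm (y k - c k))\<^sup>2) / (2 * \<sigma>\<^sup>2) = (\<Sum>k\<in>I. -(norm (y k - c k))\<^sup>2 / (2 * \<sigma>\<^sup>2))"
      by (simp add: sum_divide_distrib[symmetric] sum_negf)
    then show "ennreal (exp (-(\<Sum>k\<in>I. (norm (y k - c k))\<^sup>2) / (2 * \<sigma>\<^sup>2))) = (\<Prod>k\<in>I. (\<lambda>k x. ennreal (exp (-(norm (x - c k))\<^sup>2 / (2 * \<sigma>\<^sup>2)))) k (y k))"
      using assms(2) by (simp add: exp_sum prod_ennreal)
  qed
  also have "\<dots> = (\<Prod>k\<in>I. ennreal (sqrt (2 * pi * \<sigma>\<^sup>2) ^ DIM('a)))"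
    by (subst product_nn_integral_prod) (auto simp: assms gaussE[OF assms(1), simplified])
  finally show ?thesis using assms by (simp add: prod_ennreal ennreal_power[symmetric] power_mult[symmetric] mult.commute)
qed

lemma nn_integral_pair_prod:
  fixes f :: "'a \<Rightarrow> ennreal" and g :: "'b \<Rightarrow> ennreal"
  assumes "sigma_finite_measure N" "f \<in> borel_measurable M" "g \<in> borel_measurable N"
  shows "(\<integral>\<^sup>+y. f (fst y) * g (snd y) \<partial>(M \<Otimes>\<^sub>M N)) = (\<integral>\<^sup>+x. f x \<partial>M) * (\<integral>\<^sup>+u. g u \<partial>N)"
proof -
  interpret N: sigma_finite_measure N by fact
  have "(\<integral>\<^sup>+y. f (fst y) * g (snd y) \<partial>(M \<Otimes>\<^sub>M N)) = (\<integral>\<^sup>+x. \<integral>\<^sup>+u. f x * g u \<partial>N \<partial>M)"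
    by (subst N.nn_integral_fst[symmetric]) (use assms in auto)
  also have "\<dots> = (\<integral>\<^sup>+x. f x * (\<integral>\<^sup>+u. g u \<partial>N) \<partial>M)"
    by (intro nn_integral_cong nn_integral_cmult) (use assms in auto)
  also have "\<dots> = (\<integral>\<^sup>+x. f x \<partial>M) * (\<integral>\<^sup>+u. g u \<partial>N)"
    by (rule nn_integral_multc) (use assms in auto)
  finally show ?thesis .
qed

definition gdens :: "nat \<Rightarrow> real \<Rightarrow> ('x::euclidean_space, 'u::euclidean_space) obs \<Rightarrow> ('x, 'u) obs \<Rightarrow> real" where
  "gdens \<tau> \<sigma> c y = (2 * pi * \<sigma>\<^sup>2) powr (- real (obs_dim \<tau> TYPE('x \<times> 'u)) / 2)
                    * exp (- obs_dist2 \<tau> y c / (2 * \<sigma>\<^sup>2))"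

lemma gauss_obs_gdens: "gauss_obs \<tau> \<sigma> c = density (obs_measure \<tau>) (\<lambda>y. ennreal (gdens \<tau> \<sigma> c y))"
  unfolding gauss_obs_def gdens_def ..

lemma gdens_nonneg: "0 \<le> gdens \<tau> \<sigma> c y"
  unfolding gdens_def by simp

lemma gdens_measurable[measurable]: "gdens \<tau> \<sigma> c \<in> borel_measurable (obs_measure \<tau>)"
  unfolding gdens_def obs_dist2_def obs_measure_def by measurable

lemma sqrt_pow_powr: "x > 0 \<Longrightarrow> sqrt x ^ n = x powr (real n / 2)"
  by (simp add: sqrt_def powr_realpow[symmetric] powr_powr root_powr_inverse)

lemma gdens_total:
  fixes c :: "('x::euclidean_space, 'u::euclidean_space) obs"
  assumes "\<sigma> > 0"
  shows "(\<integral>\<^sup>+y. ennreal (gdens \<tau> \<sigma> c y) \<partial>obs_measure \<tau>) = 1"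
proof -
  define G where "G = 2 * pi * \<sigma>\<^sup>2"
  have G: "G > 0" using assms by (simp add: G_def)
  define C where "C = G powr (- real (obs_dim \<tau> TYPE('x \<times> 'u)) / 2)"
  define f where "f = (\<lambda>x::nat\<Rightarrow>'x. ennreal (exp (-(\<Sum>k\<in>{1..\<tau>}. (norm (x k - fst c k))\<^sup>2) / (2 * \<sigma>\<^sup>2))))"
  define g where "g = (\<lambda>x::nat\<Rightarrow>'u. ennreal (exp (-(\<Sum>k\<in>{1..\<tau>-1}. (norm (x k - snd c k))\<^sup>2) / (2 * \<sigma>\<^sup>2))))"
  have fm: "f \<in> borel_measurable (\<Pi>\<^sub>M k\<in>{1..\<tau>}. lborel)" unfolding f_def by measurable
  have gm: "g \<in> borel_measurable (\<Pi>\<^sub>M k\<in>{1..\<tau>-1}. lborel)" unfolding g_def by measurable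
  have sf: "sigma_finite_measure (\<Pi>\<^sub>M k\<in>{1..\<tau>-1}. (lborel::'u measure))"
  proof -
    interpret product_sigma_finite "\<lambda>_. lborel :: 'u measure" by standard
    show ?thesis by (rule sigma_finite) simp
  qed
  have "(\<integral>\<^sup>+y. ennreal (gdens \<tau> \<sigma> c y) \<partial>obs_measure \<tau>)
      = (\<integral>\<^sup>+y. ennreal C * (f (fst y) * g (snd y)) \<partial>obs_measure \<tau>)"
  proof (intro nn_integral_cong)
    fix y :: "('x, 'u) obs"
    have e: "exp (- (A + B) / s) = exp (-A/s) * exp(-B/s)" for A B s :: real
      by (simp add: exp_add[symmetric] diff_divide_distrib)
    show "ennreal (gdens \<tau> \<sigma> c y) = ennreal C * (f (fst y) * g (snd y))"
      unfolding gdens_def obs_dist2_def e f_def g_def C_def G_def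
      by (simp add: ennreal_mult)
  qed
  also have "\<dots> = ennreal C * (\<integral>\<^sup>+y. f (fst y) * g (snd y) \<partial>obs_measure \<tau>)"
    by (rule nn_integral_cmult) (use fm gm in \<open>simp add: obs_measure_def\<close>)
  also have "(\<integral>\<^sup>+y. f (fst y) * g (snd y) \<partial>obs_measure \<tau>) = (\<integral>\<^sup>+x. f x \<partial>(\<Pi>\<^sub>M k\<in>{1..\<tau>}. lborel)) * (\<integral>\<^sup>+u. g u \<partial>(\<Pi>\<^sub>M k\<in>{1..\<tau>-1}. lborel))"
    unfolding obs_measure_def by (rule nn_integral_pair_prod[OF sf fm gm])
  also have "\<dots> = ennreal (sqrt G ^ (\<tau> * DIM('x))) * ennreal (sqrt G ^ ((\<tau>-1) * DIM('u)))"
    unfolding f_def g_def G_def using gaussP[OF assms finite_atLeastAtMost, where c="fst c"] gaussP[OF assms finite_atLeastAtMost, where c="snd c"] by simp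
  also have "ennreal C * \<dots> = ennreal (C * (sqrt G ^ (\<tau> * DIM('x)) * sqrt G ^ ((\<tau>-1) * DIM('u))))"
    using G by (simp add: ennreal_mult C_def)
  also have "C * (sqrt G ^ (\<tau> * DIM('x)) * sqrt G ^ ((\<tau>-1) * DIM('u))) = 1"
    using G unfolding C_def obs_dim_def
    by (simp add: sqrt_pow_powr powr_add[symmetric] add_divide_distrib diff_divide_distrib)
  finally show ?thesis by simp
qed

lemma gdens_integrable: "\<sigma> > 0 \<Longrightarrow> integrable (obs_measure \<tau>) (gdens \<tau> \<sigma> c)"
  by (rule integrableI_nn_integral_finite[where x=1]) (auto simp: gdens_nonneg gdens_total)

lemma gdens_integral: assumes "\<sigma> > 0" shows "(\<integral>y. gdens \<tau> \<sigma> c y \<partial>obs_measure \<tau>) = 1"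
proof -
  have "ennreal (\<integral>y. gdens \<tau> \<sigma> c y \<partial>obs_measure \<tau>) = 1"
    using gdens_total[OF assms, of \<tau> c]
    by (subst (asm) nn_integral_eq_integral) (auto simp: gdens_nonneg gdens_integrable[OF assms])
  then show ?thesis by simp
qed

lemma gauss_in_prob: "\<sigma> > 0 \<Longrightarrow> gauss_obs \<tau> \<sigma> c \<in> space (prob_algebra (obs_measure \<tau>))"
  unfolding space_prob_algebra gauss_obs_gdens
  by (auto intro!: prob_spaceI simp: emeasure_density gdens_total)

lemma bind_sets:
  assumes "\<sigma> > 0" "K \<in> obs_measure \<tau> \<rightarrow>\<^sub>M prob_algebra (borel :: 'a::topological_space measure)"
  shows "sets (gauss_obs \<tau> \<sigma> c \<bind> K) = sets (borel :: 'a measure)"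
  by (rule sets_bind'[OF gauss_in_prob[OF assms(1)] assms(2)])

lemma bind_measure:
  fixes K :: "('x::euclidean_space, 'u::euclidean_space) obs \<Rightarrow> 'a::topological_space measure"
  assumes s: "\<sigma> > 0" and K: "K \<in> obs_measure \<tau> \<rightarrow>\<^sub>M prob_algebra (borel :: 'a::topological_space measure)"
    and X: "X \<in> sets (borel :: 'a measure)"
  shows "measure (gauss_obs \<tau> \<sigma> c \<bind> K) X = (\<integral>y. gdens \<tau> \<sigma> c y * measure (K y) X \<partial>obs_measure \<tau>)"
proof -
  have fm: "(\<lambda>y. measure (K y) X) \<in> borel_measurable (obs_measure \<tau>)"
    by (rule measurable_compose[OF K measurable_measure_prob_algebra[OF X]])
  have Kp: "prob_space (K y)" if "y \<in> space (obs_measure \<tau>)" for y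
    using measurable_space[OF K that] by (simp add: space_prob_algebra)
  have Ks: "sets (K y) = sets borel" if "y \<in> space (obs_measure \<tau>)" for y
    using measurable_space[OF K that] by (simp add: space_prob_algebra)
  have f01: "0 \<le> measure (K y) X \<and> measure (K y) X \<le> 1" if "y \<in> space (obs_measure \<tau>)" for y
    using prob_space.prob_le_1[OF Kp[OF that]] by simp
  have int: "integrable (obs_measure \<tau>) (\<lambda>y. gdens \<tau> \<sigma> c y * measure (K y) X)"
  proof (rule Bochner_Integration.integrable_bound[OF gdens_integrable[OF s]])
    show "(\<lambda>y. gdens \<tau> \<sigma> c y * measure (K y) X) \<in> borel_measurable (obs_measure \<tau>)"
      using fm by measurable
    show "AE y in obs_measure \<tau>. norm (gdens \<tau> \<sigma> c y * measure (K y) X) \<le> norm (gdens \<tau> \<sigma> c y)"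
      using f01 by (auto simp: gdens_nonneg abs_mult intro!: mult_left_le)
  qed
  have "emeasure (gauss_obs \<tau> \<sigma> c \<bind> K) X = (\<integral>\<^sup>+y. emeasure (K y) X \<partial>gauss_obs \<tau> \<sigma> c)"
    by (rule emeasure_bind_prob_algebra[OF gauss_in_prob[OF s] K X])
  also have "\<dots> = (\<integral>\<^sup>+y. ennreal (gdens \<tau> \<sigma> c y) * emeasure (K y) X \<partial>obs_measure \<tau>)"
    unfolding gauss_obs_gdens
    by (rule nn_integral_density) (auto intro: measurable_compose[OF measurable_prob_algebraD[OF K] measurable_emeasure_subprob_algebra[OF X]])
  also have "\<dots> = (\<integral>\<^sup>+y. ennreal (gdens \<tau> \<sigma> c y * measure (K y) X) \<partial>obs_measure \<tau>)"
  proof (intro nn_integral_cong)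
    fix y :: "('x, 'u) obs" assume y: "y \<in> space (obs_measure \<tau>)"
    interpret prob_space "K y" by (rule Kp[OF y])
    show "ennreal (gdens \<tau> \<sigma> c y) * emeasure (K y) X = ennreal (gdens \<tau> \<sigma> c y * measure (K y) X)"
      by (simp add: emeasure_eq_measure ennreal_mult gdens_nonneg)
  qed
  also have "\<dots> = ennreal (\<integral>y. gdens \<tau> \<sigma> c y * measure (K y) X \<partial>obs_measure \<tau>)"
    by (rule nn_integral_eq_integral[OF int]) (auto simp: gdens_nonneg)
  finally show ?thesis
    by (simp add: measure_def integral_nonneg_AE gdens_nonneg)
qed

lemma par_vec:
  fixes y a b :: "'a::real_inner"
  shows "(norm (y - a))\<^sup>2 + (norm (y - b))\<^sup>2 = 2 * (norm (y - (1/2) *\<^sub>R (a + b)))\<^sup>2 + (norm (a - b))\<^sup>2 / 2"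
  unfolding power2_norm_eq_inner
  by (simp add: inner_diff_left inner_diff_right inner_add_left inner_add_right inner_commute algebra_simps)
     (simp add: field_simps)

lemma par_sum:
  fixes f a b :: "nat \<Rightarrow> 'v::real_inner"
  shows "(\<Sum>k\<in>A. (norm (f k - a k))\<^sup>2) + (\<Sum>k\<in>A. (norm (f k - b k))\<^sup>2)
     = 2 * (\<Sum>k\<in>A. (norm (f k - (1/2) *\<^sub>R (a k + b k)))\<^sup>2) + (\<Sum>k\<in>A. (norm (a k - b k))\<^sup>2) / 2"
  by (simp only: sum.distrib[symmetric] sum_distrib_left sum_divide_distrib par_vec)

definition mid :: "('x::euclidean_space, 'u::euclidean_space) obs \<Rightarrow> ('x, 'u) obs \<Rightarrow> ('x, 'u) obs" where
  "mid c c' = ((\<lambda>k. (1/2) *\<^sub>R (fst c k + fst c' k)), (\<lambda>k. (1/2) *\<^sub>R (snd c k + snd c' k)))"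

lemma aux4: "(a1::real) + b1 = 2*m1 + d1/2 \<Longrightarrow> a2+b2 = 2*m2+d2/2 \<Longrightarrow> a1+a2+(b1+b2) = 2*(m1+m2)+(d1+d2)/2"
  by (simp add: field_simps)

lemma obs_par:
  "obs_dist2 \<tau> y c + obs_dist2 \<tau> y c' = 2 * obs_dist2 \<tau> y (mid c c') + obs_dist2 \<tau> c c' / 2"
  unfolding obs_dist2_def mid_def fst_conv snd_conv
  by (rule aux4[OF par_sum par_sum])

lemma sqrt_gdens:
  assumes "\<sigma> > 0"
  shows "sqrt (gdens \<tau> \<sigma> c y * gdens \<tau> \<sigma> c' y) = exp (- obs_dist2 \<tau> c c' / (8 * \<sigma>\<^sup>2)) * gdens \<tau> \<sigma> (mid c c') y"
proof -
  define C where "C = (2 * pi * \<sigma>\<^sup>2) powr (- real (obs_dim \<tau> TYPE('a \<times> 'b)) / 2)"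
  define e where "e = exp (- obs_dist2 \<tau> c c' / (8 * \<sigma>\<^sup>2))"
  define E1 where "E1 = exp (- obs_dist2 \<tau> y c / (2 * \<sigma>\<^sup>2))"
  define E2 where "E2 = exp (- obs_dist2 \<tau> y c' / (2 * \<sigma>\<^sup>2))"
  define Em where "Em = exp (- obs_dist2 \<tau> y (mid c c') / (2 * \<sigma>\<^sup>2))"
  have C: "C \<ge> 0" by (simp add: C_def)
  have k1: "E1 * E2 = exp (- (obs_dist2 \<tau> y c + obs_dist2 \<tau> y c') / (2 * \<sigma>\<^sup>2))"
    unfolding E1_def E2_def by (simp add: exp_add[symmetric] add_divide_distrib diff_divide_distrib)
  have k2: "(e * Em)\<^sup>2 = exp (2 * (- obs_dist2 \<tau> c c' / (8 * \<sigma>\<^sup>2) + - obs_dist2 \<tau> y (mid c c') / (2 * \<sigma>\<^sup>2)))"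
    unfolding e_def Em_def power2_eq_square exp_add[symmetric] by (simp add: algebra_simps)
  have key: "E1 * E2 = (e * Em)\<^sup>2"
    unfolding k1 k2 obs_par using assms by (simp add: field_simps)
  have "gdens \<tau> \<sigma> c y * gdens \<tau> \<sigma> c' y = (e * gdens \<tau> \<sigma> (mid c c') y)\<^sup>2"
  proof -
    have "gdens \<tau> \<sigma> c y * gdens \<tau> \<sigma> c' y = C\<^sup>2 * (E1 * E2)"
      unfolding gdens_def C_def E1_def E2_def by (simp add: power2_eq_square algebra_simps)
    also have "\<dots> = (e * (C * Em))\<^sup>2" unfolding key by (simp add: power_mult_distrib algebra_simps)
    finally show ?thesis unfolding gdens_def C_def Em_def .
  qed
  moreover have "e * gdens \<tau> \<sigma> (mid c c') y \<ge> 0" by (simp add: e_def gdens_nonneg)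
  ultimately show ?thesis by (simp add: e_def)
qed

lemma amgm_aux:
  fixes p q t :: real assumes "p \<ge> 0" "q \<ge> 0" "t > 0"
  shows "\<bar>p\<^sup>2 - q\<^sup>2\<bar> \<le> t/2 * (p - q)\<^sup>2 + 1/(2*t) * (p + q)\<^sup>2"
proof -
  have "p\<^sup>2 - q\<^sup>2 = (p - q) * (p + q)" by (simp add: power2_eq_square algebra_simps)
  then have e: "\<bar>p\<^sup>2 - q\<^sup>2\<bar> = \<bar>p - q\<bar> * (p + q)"
    using assms by (simp add: abs_mult)
  have "0 \<le> (t * \<bar>p - q\<bar> - (p + q))\<^sup>2" by simp
  also have "(t * \<bar>p - q\<bar> - (p + q))\<^sup>2 = t\<^sup>2 * (p - q)\<^sup>2 + (p + q)\<^sup>2 - 2 * t * (\<bar>p - q\<bar> * (p + q))"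
    by (simp add: power2_eq_square algebra_simps abs_mult_self_eq)
  finally have "2 * t * (\<bar>p - q\<bar> * (p + q)) \<le> t\<^sup>2 * (p - q)\<^sup>2 + (p + q)\<^sup>2"
    by simp
  then have "\<bar>p - q\<bar> * (p + q) \<le> (t\<^sup>2 * (p - q)\<^sup>2 + (p + q)\<^sup>2) / (2 * t)"
    using assms by (simp add: pos_le_divide_eq mult.commute)
  also have "\<dots> = t/2 * (p - q)\<^sup>2 + 1/(2*t) * (p + q)\<^sup>2"
    using assms by (simp add: field_simps power2_eq_square)
  finally show ?thesis using e by simp
qed

lemma amgm:
  fixes a b t :: real assumes "a \<ge> 0" "b \<ge> 0" "t > 0"
  shows "\<bar>a - b\<bar> \<le> t/2 * (a + b - 2 * sqrt (a * b)) + 1/(2*t) * (a + b + 2 * sqrt (a * b))"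
proof -
  have "\<bar>(sqrt a)\<^sup>2 - (sqrt b)\<^sup>2\<bar> \<le> t/2 * (sqrt a - sqrt b)\<^sup>2 + 1/(2*t) * (sqrt a + sqrt b)\<^sup>2"
    using assms by (intro amgm_aux) auto
  moreover have "(sqrt a - sqrt b)\<^sup>2 = a + b - 2 * sqrt (a * b)" "(sqrt a + sqrt b)\<^sup>2 = a + b + 2 * sqrt (a * b)"
    using assms by (simp_all add: power2_diff power2_sum real_sqrt_mult)
  ultimately show ?thesis
    using assms by simp
qed

lemma L1_bound:
  fixes c c' :: "('x::euclidean_space, 'u::euclidean_space) obs"
  assumes s: "\<sigma> > 0" and t: "t > 0"
  shows "(\<integral>y. \<bar>gdens \<tau> \<sigma> c y - gdens \<tau> \<sigma> c' y\<bar> \<partial>obs_measure \<tau>)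
     \<le> t * (1 - exp (- obs_dist2 \<tau> c c' / (8 * \<sigma>\<^sup>2))) + (1 + exp (- obs_dist2 \<tau> c c' / (8 * \<sigma>\<^sup>2))) / t"
proof -
  define e where "e = exp (- obs_dist2 \<tau> c c' / (8 * \<sigma>\<^sup>2))"
  define K where "K = t/2 + 1/(2*t)"
  define h where "h = (\<lambda>y. K * gdens \<tau> \<sigma> c y + K * gdens \<tau> \<sigma> c' y + ((1/t - t) * e) * gdens \<tau> \<sigma> (mid c c') y)"
  have pw: "\<bar>gdens \<tau> \<sigma> c y - gdens \<tau> \<sigma> c' y\<bar> \<le> h y" for y
  proof -
    have "\<bar>gdens \<tau> \<sigma> c y - gdens \<tau> \<sigma> c' y\<bar> \<le> t/2 * (gdens \<tau> \<sigma> c y + gdens \<tau> \<sigma> c' y - 2 * sqrt (gdens \<tau> \<sigma> c y * gdens \<tau> \<sigma> c' y))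
        + 1/(2*t) * (gdens \<tau> \<sigma> c y + gdens \<tau> \<sigma> c' y + 2 * sqrt (gdens \<tau> \<sigma> c y * gdens \<tau> \<sigma> c' y))"
      by (rule amgm[OF gdens_nonneg gdens_nonneg t])
    also have "\<dots> = h y"
      unfolding sqrt_gdens[OF s] h_def K_def e_def using t by (simp add: field_simps)
    finally show ?thesis .
  qed
  have i1: "integrable (obs_measure \<tau>) (gdens \<tau> \<sigma> c)" "integrable (obs_measure \<tau>) (gdens \<tau> \<sigma> c')"
    "integrable (obs_measure \<tau>) (gdens \<tau> \<sigma> (mid c c'))"
    by (rule gdens_integrable[OF s])+
  have ih: "integrable (obs_measure \<tau>) h"
    unfolding h_def using i1 by auto
  have "(\<integral>y. \<bar>gdens \<tau> \<sigma> c y - gdens \<tau> \<sigma> c' y\<bar> \<partial>obs_measure \<tau>) \<le> (\<integral>y. h y \<partial>obs_measure \<tau>)"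
    by (rule integral_mono[OF _ ih pw]) (use i1 in auto)
  also have "(\<integral>y. h y \<partial>obs_measure \<tau>) = K + K + (1/t - t) * e"
    unfolding h_def using i1 by (simp add: gdens_integral[OF s])
  also have "\<dots> = t * (1 - e) + (1 + e) / t"
    unfolding K_def using t by (simp add: field_simps)
  finally show ?thesis unfolding e_def .
qed

lemma d_traj_ge:
  assumes "k \<in> {1..\<tau>}" shows "norm (fst c k - fst c' k) \<le> d_traj \<tau> c c'"
  unfolding d_traj_def using assms by (intro Max_ge) auto

lemma d_traj_ge2:
  assumes "k \<in> {1..\<tau>-1}" shows "norm (snd c k - snd c' k) \<le> d_traj \<tau> c c'"
  unfolding d_traj_def using assms by (intro Max_ge) auto

lemma dist_bound:
  assumes "1 \<le> \<tau>"
  shows "obs_dist2 \<tau> c c' \<le> (2 * real \<tau> - 1) * (d_traj \<tau> c c')\<^sup>2"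
proof -
  let ?d = "d_traj \<tau> c c'"
  have d0: "0 \<le> ?d" using d_traj_ge[of 1 \<tau> c c'] assms by (meson atLeastAtMost_iff le_refl norm_ge_zero order_trans)
  have a: "(\<Sum>k\<in>{1..\<tau>}. (norm (fst c k - fst c' k))\<^sup>2) \<le> of_nat (card {1..\<tau>}) * ?d\<^sup>2"
    by (rule sum_bounded_above) (auto intro!: power_mono d_traj_ge)
  have b: "(\<Sum>k\<in>{1..\<tau>-1}. (norm (snd c k - snd c' k))\<^sup>2) \<le> of_nat (card {1..\<tau>-1}) * ?d\<^sup>2"
    by (rule sum_bounded_above) (auto intro!: power_mono d_traj_ge2)
  have "obs_dist2 \<tau> c c' \<le> real \<tau> * ?d\<^sup>2 + real (\<tau> - 1) * ?d\<^sup>2"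
    unfolding obs_dist2_def using a b by simp
  also have "\<dots> = (2 * real \<tau> - 1) * ?d\<^sup>2"
    using assms by (simp add: of_nat_diff algebra_simps)
  finally show ?thesis .
qed

lemma d_traj_nonneg: "1 \<le> \<tau> \<Longrightarrow> 0 \<le> d_traj \<tau> c c'"
  using d_traj_ge[of 1 \<tau> c c'] by (meson atLeastAtMost_iff le_refl norm_ge_zero order_trans)

lemma I_bound:
  fixes c c' :: "('x::euclidean_space, 'u::euclidean_space) obs"
  assumes s: "\<sigma> > 0"
  shows "(\<integral>y. \<bar>gdens \<tau> \<sigma> c y - gdens \<tau> \<sigma> c' y\<bar> \<partial>obs_measure \<tau>) / 2 \<le> sqrt (obs_dist2 \<tau> c c') / (2 * \<sigma>)"
proof (rule field_le_epsilon)
  fix \<epsilon> :: real assume \<epsilon>: "\<epsilon> > 0"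
  define D where "D = obs_dist2 \<tau> c c'"
  have D0: "D \<ge> 0" unfolding D_def obs_dist2_def by (intro add_nonneg_nonneg sum_nonneg) auto
  define e where "e = exp (- D / (8 * \<sigma>\<^sup>2))"
  define r where "r = sqrt D / (2 * \<sigma>) + \<epsilon>"
  have r0: "r > 0" unfolding r_def using s \<epsilon> D0 by (simp add: add_nonneg_pos)
  have e0: "e > 0" unfolding e_def by simp
  define t where "t = (1 + e) / r"
  have t0: "t > 0" unfolding t_def using e0 r0 by simp
  have "(\<integral>y. \<bar>gdens \<tau> \<sigma> c y - gdens \<tau> \<sigma> c' y\<bar> \<partial>obs_measure \<tau>) \<le> t * (1 - e) + (1 + e) / t"
    using L1_bound[OF s t0, of \<tau> c c'] unfolding e_def D_def .
  also have "\<dots> = (1 - e\<^sup>2) / r + r"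
  proof -
    have p: "1 + e > 0" using e0 by simp
    have "t * (1 - e) = (1 - e\<^sup>2) / r" unfolding t_def by (simp add: power2_eq_square algebra_simps)
    moreover have "(1 + e) / t = r" unfolding t_def using p r0 by simp
    ultimately show ?thesis by simp
  qed
  also have "(1 - e\<^sup>2) / r \<le> r"
  proof -
    have "e\<^sup>2 = exp (- (D / (4 * \<sigma>\<^sup>2)))" unfolding e_def power2_eq_square exp_add[symmetric]
      by (simp add: field_simps)
    moreover have "1 - exp (- x) \<le> x" for x :: real using exp_ge_add_one_self[of "-x"] by simp
    ultimately have "1 - e\<^sup>2 \<le> D / (4 * \<sigma>\<^sup>2)" by simp
    also have "\<dots> = (sqrt D / (2 * \<sigma>))\<^sup>2" using D0 by (simp add: power_divide power_mult_distrib)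
    also have "\<dots> \<le> r\<^sup>2" unfolding r_def using s \<epsilon> D0 by (intro power_mono) auto
    finally show ?thesis using r0 by (simp add: divide_le_eq power2_eq_square)
  qed
  finally show "(\<integral>y. \<bar>gdens \<tau> \<sigma> c y - gdens \<tau> \<sigma> c' y\<bar> \<partial>obs_measure \<tau>) / 2 \<le> sqrt (obs_dist2 \<tau> c c') / (2 * \<sigma>) + \<epsilon>"
    unfolding r_def D_def by simp
qed

lemma pw_aux:
  fixes x f :: real assumes "0 \<le> f" "f \<le> 1"
  shows "x * f \<le> (x + \<bar>x\<bar>) / 2" "- (x * f) \<le> (- x + \<bar>x\<bar>) / 2"
proof -
  have "x * f \<le> x" if "x \<ge> 0" using assms that by (simp add: mult_left_le)
  moreover have "x * f \<le> 0" if "x < 0" using assms that by (simp add: mult_nonpos_nonneg)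
  moreover have "- (x * f) \<le> 0" if "x \<ge> 0" using assms that by simp
  moreover have "- (x * f) \<le> - x" if "x < 0" using assms that
    by (metis minus_mult_left mult_left_le neg_0_le_iff_le order_less_imp_le)
  ultimately show "x * f \<le> (x + \<bar>x\<bar>) / 2" "- (x * f) \<le> (- x + \<bar>x\<bar>) / 2"
    by (cases "x \<ge> 0"; simp)+
qed

lemma event_bound:
  fixes K :: "('x::euclidean_space, 'u::euclidean_space) obs \<Rightarrow> 'a::topological_space measure"
    and c c' :: "('x, 'u) obs"
  assumes s: "\<sigma> > 0" and K: "K \<in> obs_measure \<tau> \<rightarrow>\<^sub>M prob_algebra (borel :: 'a measure)"
    and X: "X \<in> sets (borel :: 'a measure)"
  shows "\<bar>measure (gauss_obs \<tau> \<sigma> c \<bind> K) X - measure (gauss_obs \<tau> \<sigma> c' \<bind> K) X\<bar>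
     \<le> (\<integral>y. \<bar>gdens \<tau> \<sigma> c y - gdens \<tau> \<sigma> c' y\<bar> \<partial>obs_measure \<tau>) / 2"
proof -
  define f where "f = (\<lambda>y. measure (K y) X)"
  define g where "g = gdens \<tau> \<sigma> c"
  define g' where "g' = gdens \<tau> \<sigma> c'"
  have fm: "f \<in> borel_measurable (obs_measure \<tau>)"
    unfolding f_def by (rule measurable_compose[OF K measurable_measure_prob_algebra[OF X]])
  have Kp: "prob_space (K y)" if "y \<in> space (obs_measure \<tau>)" for y
    using measurable_space[OF K that] by (simp add: space_prob_algebra)
  have f01: "0 \<le> f y \<and> f y \<le> 1" if "y \<in> space (obs_measure \<tau>)" for y
    using prob_space.prob_le_1[OF Kp[OF that]] by (simp add: f_def)
  have ig: "integrable (obs_measure \<tau>) g" "integrable (obs_measure \<tau>) g'"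
    unfolding g_def g'_def by (rule gdens_integrable[OF s])+
  have intf: "integrable (obs_measure \<tau>) (\<lambda>y. G y * f y)" if G: "integrable (obs_measure \<tau>) G" for G
  proof (rule Bochner_Integration.integrable_bound[OF G])
    show "(\<lambda>y. G y * f y) \<in> borel_measurable (obs_measure \<tau>)"
      using fm borel_measurable_integrable[OF G] by measurable
    show "AE y in obs_measure \<tau>. norm (G y * f y) \<le> norm (G y)"
      using f01 by (auto simp: abs_mult intro!: mult_left_le)
  qed
  have eq: "measure (gauss_obs \<tau> \<sigma> c \<bind> K) X - measure (gauss_obs \<tau> \<sigma> c' \<bind> K) X
      = (\<integral>y. (g y - g' y) * f y \<partial>obs_measure \<tau>)"
    unfolding bind_measure[OF s K X] g_def g'_def f_def
    using intf[OF ig(1)] intf[OF ig(2)] unfolding g_def g'_def f_def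
    by (simp add: left_diff_distrib)
  have ia: "integrable (obs_measure \<tau>) (\<lambda>y. \<bar>g y - g' y\<bar>)" using ig by auto
  have i2: "integrable (obs_measure \<tau>) (\<lambda>y. (g y - g' y) * f y)"
    using intf[OF ig(1)] intf[OF ig(2)] by (simp add: left_diff_distrib)
  have zero: "(\<integral>y. g y - g' y \<partial>obs_measure \<tau>) = 0"
    using ig by (simp add: g_def g'_def gdens_integral[OF s])
  have up: "(\<integral>y. (g y - g' y) * f y \<partial>obs_measure \<tau>) \<le> (\<integral>y. ((g y - g' y) + \<bar>g y - g' y\<bar>) / 2 \<partial>obs_measure \<tau>)"
  proof (rule integral_mono[OF i2])
    show "integrable (obs_measure \<tau>) (\<lambda>y. ((g y - g' y) + \<bar>g y - g' y\<bar>) / 2)" using ig ia by auto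
    fix y :: "('x, 'u) obs" assume y: "y \<in> space (obs_measure \<tau>)"
    show "(g y - g' y) * f y \<le> ((g y - g' y) + \<bar>g y - g' y\<bar>) / 2"
      using f01[OF y] pw_aux by blast
  qed
  have lo: "(\<integral>y. - ((g y - g' y) * f y) \<partial>obs_measure \<tau>) \<le> (\<integral>y. (- (g y - g' y) + \<bar>g y - g' y\<bar>) / 2 \<partial>obs_measure \<tau>)"
  proof (rule integral_mono)
    show "integrable (obs_measure \<tau>) (\<lambda>y. - ((g y - g' y) * f y))" using i2 by auto
    show "integrable (obs_measure \<tau>) (\<lambda>y. (- (g y - g' y) + \<bar>g y - g' y\<bar>) / 2)" using ig ia by auto
    fix y :: "('x, 'u) obs" assume y: "y \<in> space (obs_measure \<tau>)"
    show "- ((g y - g' y) * f y) \<le> (- (g y - g' y) + \<bar>g y - g' y\<bar>) / 2"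
      using f01[OF y] pw_aux by blast
  qed
  have r1: "(\<integral>y. ((g y - g' y) + \<bar>g y - g' y\<bar>) / 2 \<partial>obs_measure \<tau>) = (\<integral>y. \<bar>g y - g' y\<bar> \<partial>obs_measure \<tau>) / 2"
    using ig ia zero by simp
  have r2: "(\<integral>y. (- (g y - g' y) + \<bar>g y - g' y\<bar>) / 2 \<partial>obs_measure \<tau>) = (\<integral>y. \<bar>g y - g' y\<bar> \<partial>obs_measure \<tau>) / 2"
    using ig ia zero by simp
  show ?thesis
    unfolding eq using up lo r1 r2 unfolding g_def g'_def by (simp add: abs_le_iff)
qed

theorem lemma1:
  fixes \<pi> :: "nat \<Rightarrow> ('x::euclidean_space, 'u::euclidean_space) obs \<Rightarrow> 'a::polish_space measure"
    and \<tau> H h :: nat and \<sigma> :: real and ob ob' :: "('x, 'u) obs"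
  assumes "1 \<le> \<tau>" and "\<sigma> > 0"
    and "\<And>h'. h' \<in> {1..H} \<Longrightarrow> \<pi> h' \<in> obs_measure \<tau> \<rightarrow>\<^sub>M prob_algebra (borel :: 'a measure)"
    and "h \<in> {1..H}"
    and "ob \<in> space (obs_measure \<tau>)" and "ob' \<in> space (obs_measure \<tau>)"
  shows "tv_dist (smoothed_policy \<tau> \<sigma> \<pi> h ob) (smoothed_policy \<tau> \<sigma> \<pi> h ob')
           \<le> sqrt (2 * real \<tau> - 1) / (2 * \<sigma>) * d_traj \<tau> ob ob'"
proof -
  have s: "\<sigma> > 0" by fact
  have K: "\<pi> h \<in> obs_measure \<tau> \<rightarrow>\<^sub>M prob_algebra (borel :: 'a measure)" using assms(3,4) by blast
  have sP: "sets (smoothed_policy \<tau> \<sigma> \<pi> h ob) = sets (borel :: 'a measure)"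
    unfolding smoothed_policy_def by (rule bind_sets[OF s K])
  have d0: "0 \<le> d_traj \<tau> ob ob'" by (rule d_traj_nonneg[OF assms(1)])
  have Dle: "sqrt (obs_dist2 \<tau> ob ob') / (2 * \<sigma>) \<le> sqrt (2 * real \<tau> - 1) / (2 * \<sigma>) * d_traj \<tau> ob ob'"
  proof -
    have "sqrt (obs_dist2 \<tau> ob ob') \<le> sqrt ((2 * real \<tau> - 1) * (d_traj \<tau> ob ob')\<^sup>2)"
      by (rule real_sqrt_le_mono[OF dist_bound[OF assms(1)]])
    also have "\<dots> = sqrt (2 * real \<tau> - 1) * d_traj \<tau> ob ob'"
      using d0 by (simp add: real_sqrt_mult)
    finally show ?thesis using s by (simp add: divide_right_mono)
  qed
  have b: "\<bar>measure (smoothed_policy \<tau> \<sigma> \<pi> h ob) X - measure (smoothed_policy \<tau> \<sigma> \<pi> h ob') X\<bar>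
      \<le> sqrt (2 * real \<tau> - 1) / (2 * \<sigma>) * d_traj \<tau> ob ob'" if X: "X \<in> sets (borel :: 'a measure)" for X
    unfolding smoothed_policy_def
    using event_bound[OF s K X, of ob ob'] I_bound[OF s, of \<tau> ob ob'] Dle by linarith
  show ?thesis
    unfolding tv_dist_def sP
    by (rule cSUP_least) (use b in auto)
qed

end
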